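(* Let $K=3$ and let $l\ge m>0$ be integers. Then \[ h(l,\,m,\,0)\ \le\ h(l-1,\,m-1,\,1)+1. \]
   Context: For a vector $\vec n=(n_1,n_2,n_3)$ of nonnegative integers, the following random process is run: stocks start at $\vec n^{(0)}=\vec n$; at each step $t=1,2,\dots$, as long as at least two coordinates of $\vec n^{(t-1)}$ are nonzero, an index $i$ is chosen uniformly at random (independently of the past) among the indices with $n_i^{(t-1)}>0$, and $\vec n^{(t)}=\vec n^{(t-1)}-\vec e_i$ ($\vec e_i$ the $i$-th standard unit vector). The process stops at the first time $T$ at which at most one coordinate is nonzero, and $h(\vec n)=\mathbb{E}[T]$. Equivalently, with $\operatorname{support}(\vec n)=\{i:n_i\ne 0\}$: $h(\vec n)=0$ if $|\operatorname{support}(\vec n)|\le1$, and otherwise $h(\vec n)=1+\frac{1}{|\operatorname{support}(\vec n)|}\sum_{i\in\operatorname{support}(\vec n)}h(\vec n-\vec e_i)$. *)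

theory Defs
  imports Complex_Main
begin

text \<open>Expected stopping time h of the K = 3 stock process, for the stock vector (a, b, c).
  nsupp a b c is the size of the support of (a, b, c); each summand corresponds to an index i
  in the support, with the recursive call on (a, b, c) - e_i.\<close>

definition nsupp :: "nat \<Rightarrow> nat \<Rightarrow> nat \<Rightarrow> nat" where
  "nsupp a b c = card {i::nat. i < 3 \<and> [a, b, c] ! i \<noteq> 0}"

function h :: "nat \<Rightarrow> nat \<Rightarrow> nat \<Rightarrow> real" where
  "h a b c =
     (if nsupp a b c \<le> 1 then 0
      else 1 + ((if a \<noteq> 0 then h (a - 1) b c else 0)
              + (if b \<noteq> 0 then h a (b - 1) c else 0)
              + (if c \<noteq> 0 then h a b (c - 1) else 0)) / real (nsupp a b c))"
  by pat_completeness auto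
termination
  by (relation "measure (\<lambda>(a, b, c). a + b + c)") auto

end

theory Submission
  imports Defs
begin

declare h.simps[simp del]

lemma nsupp_eq: "nsupp a b c = of_bool (a\<noteq>0) + of_bool (b\<noteq>0) + of_bool (c\<noteq>0)"
proof -
  have "{i::nat. i < 3 \<and> [a, b, c] ! i \<noteq> 0} =
     (if a\<noteq>0 then {0} else {}) \<union> (if b\<noteq>0 then {1} else {}) \<union> (if c\<noteq>0 then {2} else {})"
  proof (rule set_eqI)
    fix x :: nat
    show "x \<in> {i::nat. i < 3 \<and> [a, b, c] ! i \<noteq> 0} \<longleftrightarrow> x \<in> (if a\<noteq>0 then {0} else {}) \<union> (if b\<noteq>0 then {1} else {}) \<union> (if c\<noteq>0 then {2} else {})"
      by (cases "x = 0 \<or> x = 1 \<or> x = 2") auto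
  qed
  then show ?thesis unfolding nsupp_def by auto
qed

lemma h_nonneg: "h a b c \<ge> 0"
proof (induction a b c rule: h.induct)
  case (1 a b c)
  show ?case
  proof (cases "nsupp a b c \<le> 1")
    case True
    then show ?thesis by (subst h.simps) simp
  next
    case False
    have x: "0 \<le> (if a \<noteq> 0 then h (a - 1) b c else 0)" using "1.IH"(1)[OF False] by simp
    have y: "0 \<le> (if b \<noteq> 0 then h a (b - 1) c else 0)" using "1.IH"(2)[OF False] by simp
    have z: "0 \<le> (if c \<noteq> 0 then h a b (c - 1) else 0)" using "1.IH"(3)[OF False] by simp
    have "0 \<le> ((if a \<noteq> 0 then h (a - 1) b c else 0) + (if b \<noteq> 0 then h a (b - 1) c else 0)
       + (if c \<noteq> 0 then h a b (c - 1) else 0)) / real (nsupp a b c)"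
      using x y z by (intro divide_nonneg_nonneg) auto
    then show ?thesis using False by (subst h.simps) simp
  qed
qed

lemma H0a: "h 0 b 0 = 0" by (subst h.simps) (simp add: nsupp_eq)
lemma H0b: "h a 0 0 = 0" by (subst h.simps) (simp add: nsupp_eq)

lemma H00c: "h 0 0 c = 0" by (subst h.simps) (simp add: nsupp_eq)

lemma H2: "h (Suc a) (Suc b) 0 = 1 + (h a (Suc b) 0 + h (Suc a) b 0) / 2"
  by (subst h.simps) (simp add: nsupp_eq)

lemma Hsym: "h a b 0 = h b a 0"
proof (induction "a+b" arbitrary: a b rule: less_induct)
  case less
  show ?case
  proof (cases a)
    case 0 then show ?thesis by (simp add: H0a H0b)
  next
    case (Suc a')
    show ?thesis
    proof (cases b)
      case 0 then show ?thesis by (simp add: H0a H0b)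
    next
      case (Suc b')
      then show ?thesis using \<open>a = Suc a'\<close> less by (simp add: H2)
    qed
  qed
qed

lemma h0bc: "h 0 b c = h b c 0"
proof (induction "b+c" arbitrary: b c rule: less_induct)
  case less
  show ?case
  proof (cases b)
    case 0 then show ?thesis by (simp add: H0a H0b H00c)
  next
    case (Suc b')
    show ?thesis
    proof (cases c)
      case 0 then show ?thesis by (simp add: H0a H0b Hsym \<open>b = Suc b'\<close>)
    next
      case (Suc c')
      have "h 0 b c = 1 + (h 0 b' c + h 0 b c') / 2"
        by (subst h.simps) (simp add: nsupp_eq \<open>b = Suc b'\<close> Suc)
      then show ?thesis using \<open>b = Suc b'\<close> Suc less by (simp add: H2)
    qed
  qed
qed

lemma ha0c: "h a 0 c = h a c 0"
proof (induction "a+c" arbitrary: a c rule: less_induct)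
  case less
  show ?case
  proof (cases a)
    case 0 then show ?thesis by (simp add: H0a H0b H00c)
  next
    case (Suc a')
    show ?thesis
    proof (cases c)
      case 0 then show ?thesis by (simp add: H0a H0b)
    next
      case (Suc c')
      have "h a 0 c = 1 + (h a' 0 c + h a 0 c') / 2"
        by (subst h.simps) (simp add: nsupp_eq \<open>a = Suc a'\<close> Suc)
      then show ?thesis using \<open>a = Suc a'\<close> Suc less by (simp add: H2)
    qed
  qed
qed

lemma H3: "h (Suc a) (Suc b) 1 = 1 + (h a (Suc b) 1 + h (Suc a) b 1 + h (Suc a) (Suc b) 0) / 3"
  by (subst h.simps) (simp add: nsupp_eq)

lemma H1b: "h 1 y 0 \<le> 2"
proof (induction y)
  case 0 then show ?case by (simp add: H0b)
next
  case (Suc y)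
  then show ?case using H2[of 0 y] by (simp add: H0a)
qed

lemma edge: "h 2 y 0 \<le> 2 * h 1 (y+1) 0"
proof (induction y)
  case 0 then show ?case using h_nonneg[of 1 1 0] by (simp add: H0b)
next
  case (Suc y)
  have a: "h 2 (Suc y) 0 = 1 + (h 1 (Suc y) 0 + h 2 y 0) / 2"
    using H2[of 1 y] by (simp add: numeral_2_eq_2)
  have b: "h 1 (Suc (Suc y)) 0 = 1 + h 1 (Suc y) 0 / 2"
    using H2[of 0 "Suc y"] by (simp add: H0a)
  show ?case using a b Suc H1b[of "Suc y"] by simp
qed

lemma arith_aux2: "a1 + m2 \<le> 2*m1 \<Longrightarrow> m1 + b2 \<le> 2*m2 \<Longrightarrow> X = 1 + (a1+m1)/2 \<Longrightarrow> Y = 1 + (m2+b2)/2 \<Longrightarrow> Z = 1 + (m1+m2)/2 \<Longrightarrow> X + Y \<le> 2 * (Z::real)"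
  by (simp add: field_simps)

lemma conc: "h x (y+2) 0 + h (x+2) y 0 \<le> 2 * h (x+1) (y+1) 0"
proof (induction "x+y" arbitrary: x y rule: less_induct)
  case less
  show ?case
  proof (cases x)
    case 0 then show ?thesis using edge[of y] by (simp add: H0a eval_nat_numeral)
  next
    case (Suc x')
    show ?thesis
    proof (cases y)
      case 0 then show ?thesis using edge[of x] Hsym[of x 2] Hsym[of "x+1" 1] by (simp add: H0b numeral_2_eq_2)
    next
      case (Suc y')
      have i1: "h x' (y'+3) 0 + h (x'+2) (y'+1) 0 \<le> 2 * h (x'+1) (y'+2) 0"
        using less[of x' "y'+1"] \<open>x = Suc x'\<close> Suc by (simp add: eval_nat_numeral)
      have i2: "h (x'+1) (y'+2) 0 + h (x'+3) y' 0 \<le> 2 * h (x'+2) (y'+1) 0"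
        using less[of "x'+1" y'] \<open>x = Suc x'\<close> Suc by (simp add: eval_nat_numeral)
      have e1: "h (x'+1) (y'+3) 0 = 1 + (h x' (y'+3) 0 + h (x'+1) (y'+2) 0)/2"
        using H2[of x' "y'+2"] by (simp add: eval_nat_numeral)
      have e2: "h (x'+3) (y'+1) 0 = 1 + (h (x'+2) (y'+1) 0 + h (x'+3) y' 0)/2"
        using H2[of "x'+2" y'] by (simp add: eval_nat_numeral)
      have e3: "h (x'+2) (y'+2) 0 = 1 + (h (x'+1) (y'+2) 0 + h (x'+2) (y'+1) 0)/2"
        using H2[of "x'+1" "y'+1"] by (simp add: eval_nat_numeral)
      have "h (x'+1) (y'+3) 0 + h (x'+3) (y'+1) 0 \<le> 2 * h (x'+2) (y'+2) 0" by (rule arith_aux2[OF i1 i2 e1 e2 e3])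
      then show ?thesis using \<open>x = Suc x'\<close> Suc by (simp add: eval_nat_numeral)
    qed
  qed
qed

lemma arith_aux: "X \<le> P + 1 \<Longrightarrow> Y \<le> Q+1 \<Longrightarrow> A + B \<le> 2*M \<Longrightarrow> X = 1 + (A+M)/2 \<Longrightarrow> Y = 1 + (M+B)/2 \<Longrightarrow> Z = 1 + (X+Y)/2 \<Longrightarrow> W = 1 + (P+Q+M)/3 \<Longrightarrow> Z \<le> W + (1::real)"
  by (simp add: field_simps)

lemma main: "h (a+1) (b+1) 0 \<le> h a b 1 + 1"
proof (induction "a+b" arbitrary: a b rule: less_induct)
  case less
  show ?case
  proof (cases a)
    case 0
    have "h 1 (b+1) 0 = 1 + h 1 b 0 / 2" using H2[of 0 b] by (simp add: H0a)
    then show ?thesis using 0 h0bc[of b 1] Hsym[of b 1] h_nonneg[of 1 b 0] by simp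
  next
    case (Suc a')
    show ?thesis
    proof (cases b)
      case 0
      have "h (a+1) 1 0 = 1 + h a 1 0 / 2" using H2[of a 0] by (simp add: H0b)
      then show ?thesis using 0 ha0c[of a 1] h_nonneg[of a 1 0] by simp
    next
      case (Suc b')
      define A where "A = h a' (Suc (Suc b')) 0"
      define M where "M = h (Suc a') (Suc b') 0"
      define B where "B = h (Suc (Suc a')) b' 0"
      define P where "P = h a' (Suc b') 1"
      define Q where "Q = h (Suc a') b' 1"
      have i1: "h (Suc a') (Suc (Suc b')) 0 \<le> P + 1"
        using less[of a' "Suc b'"] \<open>a = Suc a'\<close> Suc by (simp add: P_def)
      have i2: "h (Suc (Suc a')) (Suc b') 0 \<le> Q + 1"
        using less[of "Suc a'" b'] \<open>a = Suc a'\<close> Suc by (simp add: Q_def)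
      have c: "A + B \<le> 2 * M" using conc[of a' b'] by (simp add: A_def B_def M_def eval_nat_numeral)
      have e1: "h (Suc a') (Suc (Suc b')) 0 = 1 + (A + M)/2"
        using H2[of a' "Suc b'"] by (simp add: A_def M_def)
      have e2: "h (Suc (Suc a')) (Suc b') 0 = 1 + (M + B)/2"
        using H2[of "Suc a'" b'] by (simp add: B_def M_def)
      have e3: "h (Suc (Suc a')) (Suc (Suc b')) 0 = 1 + (h (Suc a') (Suc (Suc b')) 0 + h (Suc (Suc a')) (Suc b') 0)/2"
        using H2[of "Suc a'" "Suc b'"] by simp
      have e4: "h (Suc a') (Suc b') 1 = 1 + (P + Q + M) / 3"
        using H3[of a' b'] by (simp add: P_def Q_def M_def)
      have "h (Suc (Suc a')) (Suc (Suc b')) 0 \<le> h (Suc a') (Suc b') 1 + 1"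
        by (rule arith_aux[OF i1 i2 c e1 e2 e3 e4])
      then show ?thesis using \<open>a = Suc a'\<close> Suc by simp
    qed
  qed
qed

theorem lemma8:
  fixes l m :: nat
  assumes "l \<ge> m" and "m > 0"
  shows "h l m 0 \<le> h (l - 1) (m - 1) 1 + 1"
  using main[of "l-1" "m-1"] assms by simp

end
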